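(* Let $(X_n)_{n\ge0}$ be a Bienaym\'e--Galton--Watson branching process with $X_0=1$ and offspring distribution $\mathrm{Bin}(n_0,1/n_0)$, $n_0\ge2$, and let $Y_n=\sum_{k=0}^nX_k$. There exist constants $c_1,c_2$ (not depending on $n_0$) such that for all $n\ge1$ and $\lambda>0$, $$P(X_n[n]\ge\lambda n)\le c_1e^{-\lambda/6},\qquad P(Y_n[n]\ge\lambda n^2)\le c_2e^{-\lambda/5}.$$
   Context: For a random variable $\xi$ and integer $n\ge1$, $\xi[n]$ denotes a random variable distributed as $\sum_{i=1}^n\xi_i$ where $\xi_1,\dots,\xi_n$ are i.i.d. copies of $\xi$. *)

theory Defs
  imports "HOL-Probability.Probability"
begin

text \<open>xi[n]: the law of the sum of n i.i.d. copies of a random variable with law xi.\<close>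
primrec iid_sum_pmf :: "nat pmf \<Rightarrow> nat \<Rightarrow> nat pmf" where
  "iid_sum_pmf xi 0 = return_pmf 0"
| "iid_sum_pmf xi (Suc k) =
     bind_pmf xi (\<lambda>a. map_pmf (\<lambda>s. a + s) (iid_sum_pmf xi k))"

text \<open>Joint law of (X_n, Y_n) for the Bienayme-Galton-Watson process with offspring
  law xi, X_0 = 1, Y_n = X_0 + ... + X_n.  Given X_n = x, X_(n+1) is the sum of x
  i.i.d. offspring counts.\<close>
primrec bgw_XY :: "nat pmf \<Rightarrow> nat \<Rightarrow> (nat \<times> nat) pmf" where
  "bgw_XY xi 0 = return_pmf (1, 1)"
| "bgw_XY xi (Suc n) =
     bind_pmf (bgw_XY xi n)
       (\<lambda>(x, y). map_pmf (\<lambda>z. (z, y + z)) (iid_sum_pmf xi x))"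

definition bgw_X :: "nat pmf \<Rightarrow> nat \<Rightarrow> nat pmf" where
  "bgw_X xi n = map_pmf fst (bgw_XY xi n)"

definition bgw_Y :: "nat pmf \<Rightarrow> nat \<Rightarrow> nat pmf" where
  "bgw_Y xi n = map_pmf snd (bgw_XY xi n)"

end

theory Submission imports Defs begin

definition pgf :: "nat pmf \<Rightarrow> ennreal \<Rightarrow> ennreal" where
  "pgf p t = (\<integral>\<^sup>+k. t ^ k \<partial>measure_pmf p)"

lemma pgf_iid: "pgf (iid_sum_pmf xi m) t = pgf xi t ^ m"
proof (induction m)
  case 0
  then show ?case by (simp add: pgf_def)
next
  case (Suc m)
  have "pgf (iid_sum_pmf xi (Suc m)) t = (\<integral>\<^sup>+a. \<integral>\<^sup>+s. t ^ a * t ^ s \<partial>iid_sum_pmf xi m \<partial>xi)"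
    by (simp add: pgf_def power_add)
  also have "\<dots> = (\<integral>\<^sup>+a. t ^ a * pgf (iid_sum_pmf xi m) t \<partial>xi)"
    by (simp add: pgf_def nn_integral_cmult)
  also have "\<dots> = pgf xi t * pgf (iid_sum_pmf xi m) t"
    by (simp add: pgf_def nn_integral_multc)
  finally show ?case using Suc by (simp add: mult.commute)
qed

definition GG :: "nat pmf \<Rightarrow> ennreal \<Rightarrow> nat \<Rightarrow> ennreal \<Rightarrow> ennreal" where
  "GG xi z n a = (\<integral>\<^sup>+p. a ^ fst p * z ^ snd p \<partial>measure_pmf (bgw_XY xi n))"

lemma GG_Suc: "GG xi z (Suc n) a = GG xi z n (pgf xi (a * z))"
proof -
  have "GG xi z (Suc n) a = (\<integral>\<^sup>+p. (case p of (x, y) \<Rightarrow> \<integral>\<^sup>+k. (a*z) ^ k * z ^ y \<partial>iid_sum_pmf xi x) \<partial>bgw_XY xi n)"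
    unfolding GG_def
    by (simp add: split_beta power_add power_mult_distrib mult_ac)
  also have "\<dots> = (\<integral>\<^sup>+p. (case p of (x, y) \<Rightarrow> pgf xi (a*z) ^ x * z ^ y) \<partial>bgw_XY xi n)"
    by (simp add: split_beta nn_integral_multc pgf_iid[symmetric]) (simp add: pgf_def)
  also have "\<dots> = GG xi z n (pgf xi (a * z))"
    unfolding GG_def by (simp add: split_beta)
  finally show ?thesis .
qed

lemma GG_mono: "a \<le> b \<Longrightarrow> GG xi z n a \<le> GG xi z n b"
  unfolding GG_def by (intro nn_integral_mono mult_right_mono power_mono) auto

lemma pgf_binom:
  assumes "n0 \<ge> 2" "t \<ge> 0"
  shows "pgf (binomial_pmf n0 (1 / real n0)) (ennreal t) \<le> ennreal (exp (t - 1))"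
proof -
  let ?p = "1 / real n0"
  have p: "0 \<le> ?p" "?p \<le> 1" using assms by auto
  have "pgf (binomial_pmf n0 ?p) (ennreal t) = (\<Sum>k\<in>{..n0}. ennreal t ^ k * pmf (binomial_pmf n0 ?p) k)"
    unfolding pgf_def using p by (intro nn_integral_measure_pmf_support) (auto simp: set_pmf_binomial_eq split: if_splits)
  also have "\<dots> = ennreal (\<Sum>k\<in>{..n0}. t ^ k * (real (n0 choose k) * ?p ^ k * (1 - ?p) ^ (n0 - k)))"
    using p assms by (subst sum_ennreal[symmetric]) (auto simp: ennreal_power ennreal_mult'[symmetric] pmf_binomial intro!: sum.cong)
  also have "(\<Sum>k\<in>{..n0}. t ^ k * (real (n0 choose k) * ?p ^ k * (1 - ?p) ^ (n0 - k))) \<le> exp (t - 1)"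
  proof -
    have "(\<Sum>k\<in>{..n0}. t ^ k * (real (n0 choose k) * ?p ^ k * (1 - ?p) ^ (n0 - k))) = (t * ?p + (1 - ?p)) ^ n0"
      by (subst binomial_ring) (auto simp: power_mult_distrib power_divide mult_ac intro!: sum.cong)
    also have "\<dots> = (1 + (t - 1) / real n0) ^ n0" by (simp add: diff_divide_distrib algebra_simps)
    also have "\<dots> \<le> exp (t - 1)" using assms by (intro exp_ge_one_plus_x_over_n_power_n) auto
    finally show ?thesis .
  qed
  finally show ?thesis by (simp add: ennreal_leI)
qed

lemma GG_bound:
  assumes "n0 \<ge> 2" "a \<ge> 0" "z \<ge> 1"
  shows "GG (binomial_pmf n0 (1 / real n0)) (ennreal z) n (ennreal a)
           \<le> ennreal (z * ((\<lambda>t. exp (z * t - 1)) ^^ n) a)"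
  using assms(2)
proof (induction n arbitrary: a)
  case 0
  then show ?case using assms by (simp add: GG_def ennreal_mult' mult.commute)
next
  case (Suc n)
  let ?xi = "binomial_pmf n0 (1 / real n0)"
  let ?f = "\<lambda>t. exp (z * t - 1)"
  have "GG ?xi (ennreal z) (Suc n) (ennreal a) = GG ?xi (ennreal z) n (pgf ?xi (ennreal (a * z)))"
    using Suc.prems assms by (simp add: GG_Suc ennreal_mult')
  also have "\<dots> \<le> GG ?xi (ennreal z) n (ennreal (exp (a * z - 1)))"
    using Suc.prems assms by (intro GG_mono pgf_binom) auto
  also have "\<dots> \<le> ennreal (z * (?f ^^ n) (exp (a * z - 1)))"
    by (rule Suc.IH) simp
  also have "(?f ^^ n) (exp (a * z - 1)) = (?f ^^ Suc n) a"
    by (simp add: funpow_Suc_right mult.commute del: funpow.simps)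
  finally show ?case .
qed

lemma key_ineq:
  fixes j m s c :: real
  assumes "1 < j" "j \<le> m" "0 \<le> s" "0 < c" "s * m^2 \<le> c * (1 - c)"
  shows "s + c / j + (c / j)^2 \<le> c / (j - 1)"
proof -
  have "s * j^2 \<le> s * m^2" using assms by (intro mult_left_mono power_mono) auto
  hence "s * j^2 \<le> c - c^2" using assms by (simp add: algebra_simps power2_eq_square)
  hence "s \<le> (c - c^2) / j^2" using assms by (simp add: field_simps)
  hence "s + c / j + (c / j)^2 \<le> c / j + c / j^2" by (simp add: power_divide diff_divide_distrib)
  also have "\<dots> \<le> c / (j - 1)"
  proof -
    have "c / j + c / j^2 = c * (j + 1) / j^2" using assms by (simp add: field_simps power2_eq_square)
    also have "\<dots> \<le> c / (j - 1)"
    proof -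
      have "c * (j + 1) * (j - 1) \<le> c * j^2" using assms by (simp add: algebra_simps power2_eq_square)
      thus ?thesis using assms by (simp add: field_simps)
    qed
    finally show ?thesis .
  qed
  finally show ?thesis .
qed

lemma riccati:
  fixes w :: "nat \<Rightarrow> real" and s c m :: real
  assumes "0 \<le> s" "0 < c" "real n < m" "s * m^2 \<le> c * (1 - c)" "w 0 \<le> c / m"
    "c / (m - real n) \<le> 1" "\<And>k. 0 \<le> w k"
    "\<And>k. k < n \<Longrightarrow> w k \<le> 1 \<Longrightarrow> w (Suc k) \<le> s + w k + (w k)^2"
  shows "k \<le> n \<Longrightarrow> w k \<le> c / (m - real k)"
proof (induction k)
  case 0
  then show ?case using assms by simp
next
  case (Suc k)
  have IH: "w k \<le> c / (m - real k)" using Suc by simp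
  have pos: "m - real n > 0" using assms by simp
  have "c / (m - real k) \<le> c / (m - real n)"
    using Suc.prems pos assms by (intro divide_left_mono) auto
  hence w1: "w k \<le> 1" using IH assms by linarith
  have "w (Suc k) \<le> s + w k + (w k)^2" using assms(8)[of k] Suc.prems w1 by simp
  also have "\<dots> \<le> s + c / (m - real k) + (c / (m - real k))^2"
    using IH assms(7)[of k] by (intro add_mono power_mono) auto
  also have "\<dots> \<le> c / (m - real k - 1)"
    using Suc.prems assms by (intro key_ineq) auto
  finally show ?case by (simp add: algebra_simps)
qed


lemma chernoff:
  fixes P :: "nat pmf"
  assumes "s \<ge> 0" "B \<ge> 0" "pgf P (ennreal (exp s)) \<le> ennreal B"
  shows "measure_pmf.prob P {k. real k \<ge> x} \<le> B * exp (- s * x)"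
proof -
  have "ennreal (measure_pmf.prob P {k. real k \<ge> x}) = emeasure P {k. real k \<ge> x}"
    by (simp add: measure_pmf.emeasure_eq_measure)
  also have "\<dots> = (\<integral>\<^sup>+k. indicator {k. real k \<ge> x} k \<partial>P)" by simp
  also have "\<dots> \<le> (\<integral>\<^sup>+k. ennreal (exp (- s * x)) * ennreal (exp s) ^ k \<partial>P)"
  proof (intro nn_integral_mono)
    fix k :: nat
    have "ennreal (exp (- s * x)) * ennreal (exp s) ^ k = ennreal (exp (s * (real k - x)))"
      by (simp add: ennreal_power ennreal_mult'[symmetric] exp_of_nat_mult[symmetric]
                    exp_add[symmetric] algebra_simps)
    moreover have "real k \<ge> x \<Longrightarrow> exp (s * (real k - x)) \<ge> 1"
      using assms by simp
    ultimately show "indicator {k. real k \<ge> x} k \<le> ennreal (exp (- s * x)) * ennreal (exp s) ^ k"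
      by (auto split: split_indicator)
  qed
  also have "\<dots> = ennreal (exp (- s * x)) * pgf P (ennreal (exp s))"
    by (simp add: nn_integral_cmult pgf_def)
  also have "\<dots> \<le> ennreal (exp (- s * x)) * ennreal B"
    using assms by (intro mult_left_mono) auto
  also have "\<dots> = ennreal (B * exp (- s * x))" using assms by (simp add: ennreal_mult' mult.commute)
  finally show ?thesis using assms by (simp add: ennreal_le_iff)
qed

lemma pgf_X: "pgf (bgw_X xi n) t = GG xi 1 n t"
  by (simp add: pgf_def GG_def bgw_X_def)

lemma pgf_Y: "pgf (bgw_Y xi n) t = GG xi t n 1"
  by (simp add: pgf_def GG_def bgw_Y_def)

lemma X_seq:
  fixes n :: nat
  assumes "n \<ge> 1"
  shows "((\<lambda>t. exp (1 * t - 1)) ^^ n) (exp (1 / (6 * real n))) \<le> 1 + 1 / (2 * real n)"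
proof -
  define f where "f = (\<lambda>t::real. exp (1 * t - 1))"
  define w where "w k = (f ^^ k) (exp (1 / (6 * real n))) - 1" for k
  have ge1: "(f ^^ k) (exp (1 / (6 * real n))) \<ge> 1" for k
    by (induction k) (auto simp: f_def)
  have w0: "\<And>k. 0 \<le> w k" using ge1 by (simp add: w_def)
  have wS: "w (Suc k) \<le> 0 + w k + (w k)^2" if "w k \<le> 1" for k
  proof -
    have "w (Suc k) = exp (w k) - 1" by (simp add: w_def f_def)
    also have "\<dots> \<le> w k + (w k)^2" using exp_bound[of "w k"] w0[of k] that by simp
    finally show ?thesis by simp
  qed
  have "w 0 \<le> 1 / (3 * real n)"
  proof -
    have "exp (1 / (6 * real n)) \<le> 1 + 1 / (6 * real n) + (1 / (6 * real n))^2"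
      using assms by (intro exp_bound) auto
    moreover have "(1 / (6 * real n))^2 \<le> 1 / (6 * real n)"
      using assms by (intro power_le_one_iff[THEN iffD2] | simp add: power2_eq_square field_simps)
    ultimately show ?thesis using assms by (simp add: w_def)
  qed
  hence "w n \<le> 1 / (3 * real n - real n)"
    using assms w0 wS
    by (intro riccati[where s=0 and c=1 and m="3 * real n" and n=n and w=w]) auto
  thus ?thesis by (simp add: w_def f_def)
qed


lemma Y_seq:
  fixes n :: nat
  assumes "n \<ge> 5"
  defines "s \<equiv> 1 / (5 * (real n)^2)"
  shows "exp s * ((\<lambda>t. exp (exp s * t - 1)) ^^ n) 1 \<le> 1 + 5 / real n"
proof -
  define z where "z = exp s"
  define f where "f = (\<lambda>t::real. exp (z * t - 1))"
  define w where "w k = s + z * (f ^^ k) 1 - 1" for k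
  have s0: "0 < s" using assms by (simp add: s_def)
  have z1: "z \<ge> 1" using s0 by (simp add: z_def)
  have ge1: "(f ^^ k) 1 \<ge> 1" for k
  proof (induction k)
    case (Suc k)
    have "z * (f ^^ k) 1 \<ge> 1" using mult_mono[of 1 z 1 "(f ^^ k) 1"] Suc z1 by simp
    then show ?case by (simp add: f_def)
  qed simp
  have w0: "\<And>k. 0 \<le> w k"
  proof -
    fix k
    have "z * (f ^^ k) 1 \<ge> 1" using mult_mono[of 1 z 1 "(f ^^ k) 1"] ge1[of k] z1 by simp
    thus "0 \<le> w k" using s0 by (simp add: w_def)
  qed
  have wS: "w (Suc k) \<le> s + w k + (w k)^2" if "w k \<le> 1" for k
  proof -
    have "w (Suc k) = s + z * exp (z * (f ^^ k) 1 - 1) - 1" by (simp add: w_def f_def)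
    also have "z * exp (z * (f ^^ k) 1 - 1) = exp (w k)"
      by (simp add: z_def w_def exp_add[symmetric])
    also have "exp (w k) \<le> 1 + w k + (w k)^2" using exp_bound[of "w k"] w0[of k] that by simp
    finally show ?thesis by simp
  qed
  have nn: "real n \<ge> 5" using assms by simp
  have nsq: "5 * 5 \<le> real n * real n" using mult_mono[OF nn nn] by simp
  hence "1 \<le> 5 * (real n)^2" by (simp add: power2_eq_square)
  hence sle: "s \<le> 1" unfolding s_def by (auto simp add: divide_le_eq_1)
  have "w 0 \<le> (1/2) / (11 / 10 * real n)"
  proof -
    have "z \<le> 1 + s + s^2" unfolding z_def using s0 sle by (intro exp_bound) auto
    moreover have "s^2 \<le> s" using s0 sle by (simp add: power2_eq_square mult_le_cancel_right1)
    moreover have "3 * s \<le> (1/2) / (11 / 10 * real n)"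
    proof -
      have "3 * s = 3 / (5 * (real n)^2)" by (simp add: s_def)
      also have "\<dots> \<le> (1/2) / (11 / 10 * real n)" using nn
        by (simp add: field_simps power2_eq_square)
      finally show ?thesis .
    qed
    ultimately show ?thesis by (simp add: w_def)
  qed
  moreover have "s * (11 / 10 * real n)^2 \<le> 1/2 * (1 - 1/2)"
    using nn by (simp add: s_def power2_eq_square field_simps)
  moreover have "(1/2) / (11 / 10 * real n - real n) \<le> 1" using nn by (simp add: field_simps)
  ultimately have "w n \<le> (1/2) / (11 / 10 * real n - real n)"
    using nn w0 wS s0
    by (intro riccati[where s=s and c="1/2" and m="11 / 10 * real n" and n=n and w=w]) auto
  also have "\<dots> = 5 / real n" using nn by (simp add: field_simps)
  finally show ?thesis using s0 by (simp add: w_def f_def z_def)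
qed


definition TY :: "nat \<Rightarrow> real" where
  "TY n = exp (1 / (5 * (real n)^2)) * ((\<lambda>t. exp (exp (1 / (5 * (real n)^2)) * t - 1)) ^^ n) 1"

lemma TY_nonneg: "0 \<le> TY n"
proof -
  have "0 \<le> ((\<lambda>t. exp (exp (1 / (5 * (real n)^2)) * t - 1)) ^^ n) 1"
    by (cases n) auto
  thus ?thesis by (simp add: TY_def)
qed

lemma partX:
  assumes "n0 \<ge> 2" "n \<ge> 1" "lam > 0"
  shows "measure_pmf.prob (iid_sum_pmf (bgw_X (binomial_pmf n0 (1 / real n0)) n) n)
        {k. real k \<ge> lam * real n} \<le> exp (1/2) * exp (- lam / 6)"
proof -
  let ?xi = "binomial_pmf n0 (1 / real n0)"
  let ?s = "1 / (6 * real n)"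
  have "GG ?xi (ennreal 1) n (ennreal (exp ?s)) \<le> ennreal (1 * ((\<lambda>t. exp (1 * t - 1)) ^^ n) (exp ?s))"
    using assms by (intro GG_bound) auto
  also have "\<dots> \<le> ennreal (1 + (1/2) / real n)"
    using X_seq[OF assms(2)] by (intro ennreal_leI) simp
  finally have g: "GG ?xi 1 n (ennreal (exp ?s)) \<le> ennreal (1 + (1/2) / real n)" by simp
  have "pgf (iid_sum_pmf (bgw_X ?xi n) n) (ennreal (exp ?s)) = GG ?xi 1 n (ennreal (exp ?s)) ^ n"
    by (simp add: pgf_iid pgf_X)
  also have "\<dots> \<le> ennreal (1 + (1/2) / real n) ^ n"
    using g by (intro power_mono) auto
  also have "\<dots> = ennreal ((1 + (1/2) / real n) ^ n)" by (intro ennreal_power) simp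
  also have "\<dots> \<le> ennreal (exp (1/2))"
    using assms by (intro ennreal_leI exp_ge_one_plus_x_over_n_power_n) auto
  finally have "measure_pmf.prob (iid_sum_pmf (bgw_X ?xi n) n) {k. real k \<ge> lam * real n}
      \<le> exp (1/2) * exp (- ?s * (lam * real n))"
    by (intro chernoff) auto
  also have "- ?s * (lam * real n) = - lam / 6" using assms by (simp add: field_simps)
  finally show ?thesis .
qed

lemma partY:
  assumes "n0 \<ge> 2" "n \<ge> 1" "lam > 0" "TY n ^ n \<le> C"
  shows "measure_pmf.prob (iid_sum_pmf (bgw_Y (binomial_pmf n0 (1 / real n0)) n) n)
        {k. real k \<ge> lam * (real n)^2} \<le> C * exp (- lam / 5)"
proof -
  let ?xi = "binomial_pmf n0 (1 / real n0)"
  let ?s = "1 / (5 * (real n)^2)"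
  have C0: "0 \<le> C" using TY_nonneg[of n] assms(4) by (meson order_trans zero_le_power)
  have "GG ?xi (ennreal (exp ?s)) n (ennreal 1) \<le> ennreal (TY n)"
    unfolding TY_def using assms by (intro GG_bound) auto
  hence g: "GG ?xi (ennreal (exp ?s)) n 1 \<le> ennreal (TY n)" by simp
  have "pgf (iid_sum_pmf (bgw_Y ?xi n) n) (ennreal (exp ?s)) = GG ?xi (ennreal (exp ?s)) n 1 ^ n"
    by (simp add: pgf_iid pgf_Y)
  also have "\<dots> \<le> ennreal (TY n) ^ n"
    using g by (intro power_mono) auto
  also have "\<dots> = ennreal (TY n ^ n)" using TY_nonneg by (simp add: ennreal_power)
  also have "\<dots> \<le> ennreal C"
    using assms by (intro ennreal_leI) auto
  finally have "measure_pmf.prob (iid_sum_pmf (bgw_Y ?xi n) n) {k. real k \<ge> lam * (real n)^2}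
      \<le> C * exp (- ?s * (lam * (real n)^2))"
    using assms C0 by (intro chernoff) auto
  also have "- ?s * (lam * (real n)^2) = - lam / 5" using assms by (simp add: field_simps)
  finally show ?thesis .
qed

lemma TY_bound:
  assumes "n \<ge> 1"
  shows "TY n ^ n \<le> max (exp 5) (Max ((\<lambda>n. TY n ^ n) ` {1..4}))"
proof (cases "n \<ge> 5")
  case True
  have "TY n ^ n \<le> (1 + 5 / real n) ^ n"
    using Y_seq[OF True] TY_nonneg by (intro power_mono) (auto simp: TY_def)
  also have "\<dots> \<le> exp 5" using True by (intro exp_ge_one_plus_x_over_n_power_n) auto
  finally show ?thesis by linarith
next
  case False
  hence "n \<in> {1..4}" using assms by auto
  hence "TY n ^ n \<le> Max ((\<lambda>n. TY n ^ n) ` {1..4})" by (intro Max_ge) auto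
  thus ?thesis by linarith
qed

theorem lemma2p2:
  "\<exists>c1 c2 :: real. \<forall>n0 :: nat. n0 \<ge> 2 \<longrightarrow> (\<forall>n :: nat. n \<ge> 1 \<longrightarrow> (\<forall>lam :: real. lam > 0 \<longrightarrow>
     measure_pmf.prob (iid_sum_pmf (bgw_X (binomial_pmf n0 (1 / real n0)) n) n)
        {k. real k \<ge> lam * real n} \<le> c1 * exp (- lam / 6) \<and>
     measure_pmf.prob (iid_sum_pmf (bgw_Y (binomial_pmf n0 (1 / real n0)) n) n)
        {k. real k \<ge> lam * (real n)^2} \<le> c2 * exp (- lam / 5)))"
  using partX partY TY_bound by blast

end
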